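(* Let $\alpha>-1$, $\beta>-1$, $\omega_{\alpha,\beta}(x)=(1-x)^{\alpha}(1+x)^{\beta}$, and for $c>0$ let $\mathcal{F}_c^{(\alpha,\beta)}[\phi](x)=\int_{-1}^{1}e^{c(xy-1)}\phi(y)\omega_{\alpha,\beta}(y)dy$ on $L^2((-1,1),\omega_{\alpha,\beta}(x)dx)$. For each $n\ge0$ let $\psi_n^{(\alpha,\beta)}(\cdot;c)$ be an eigenfunction of $\mathcal{F}_c^{(\alpha,\beta)}$ with eigenvalue $\mu_n^{(\alpha,\beta)}(c)\neq0$, normalized so that $\int_{-1}^1(\psi_n^{(\alpha,\beta)}(x;c))^2\omega_{\alpha,\beta}(x)dx=(\mu_n^{(\alpha,\beta)}(c))^2$. Then $$\frac{\partial \mu_n^{(\alpha,\beta)}(c)}{\partial c}=\frac{1}{\mu_n^{(\alpha,\beta)}(c)}\left(\frac{I_n(c)}{c}-(\mu_n^{(\alpha,\beta)}(c))^2\right),\qquad I_n(c)=\int_{-1}^{1}v\,\psi_n^{(\alpha,\beta)}(v;c)\,\frac{\partial\psi_n^{(\alpha,\beta)}(v;c)}{\partial v}\,\omega_{\alpha,\beta}(v)\,dv.$$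
   Context: The eigenvalue $\mu_n^{(\alpha,\beta)}(c)$ and the eigenfunction $\psi_n^{(\alpha,\beta)}(v;c)$ are regarded as (differentiable) functions of the parameter $c>0$. *)

theory Defs
  imports "HOL-Analysis.Analysis"
begin

definition jacobi_weight :: "real \<Rightarrow> real \<Rightarrow> real \<Rightarrow> real" where
  "jacobi_weight \<alpha> \<beta> x = (1 - x) powr \<alpha> * (1 + x) powr \<beta>"

definition F_op :: "real \<Rightarrow> real \<Rightarrow> real \<Rightarrow> (real \<Rightarrow> real) \<Rightarrow> real \<Rightarrow> real" where
  "F_op \<alpha> \<beta> c \<phi> x =
     integral {-1..1} (\<lambda>y. exp (c * (x * y - 1)) * \<phi> y * jacobi_weight \<alpha> \<beta> y)"

definition I_int :: "real \<Rightarrow> real \<Rightarrow> (real \<Rightarrow> real) \<Rightarrow> real" where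
  "I_int \<alpha> \<beta> \<psi> = integral {-1..1} (\<lambda>v. v * \<psi> v * deriv \<psi> v * jacobi_weight \<alpha> \<beta> v)"

end

theory Submission
  imports Defs
begin

lemma int_shift: assumes "b > -1" shows "(\<lambda>x. (1 + x) powr b) integrable_on {-1..0::real}"
proof -
  have "((\<lambda>x. x powr b) has_integral (1 powr (b+1) / (b+1))) {0..1::real}"
    using has_integral_powr_from_0[OF assms, of 1] by simp
  from has_integral_affinity'[OF this[unfolded cbox_interval[symmetric]], of 1 1]
  show ?thesis by (auto simp: integrable_on_def add.commute)
qed

lemma cont_powr_pos: "continuous_on S (\<lambda>x::real. (1 - x) powr a)" if "\<forall>x\<in>S. x < 1"
  using that by (intro continuous_intros) auto

lemma abs_int_half:
  assumes "a > -1" "b > -1"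
  shows "(\<lambda>x. (1 - x) powr a * (1 + x) powr b) absolutely_integrable_on {-1..0::real}"
proof (rule absolutely_integrable_bounded_measurable_product_real)
  have c: "continuous_on {-1..0::real} (\<lambda>x. (1 - x) powr a)"
    by (intro continuous_intros) auto
  show "(\<lambda>x. (1 - x) powr a) \<in> borel_measurable (lebesgue_on {-1..0::real})"
    by (rule continuous_imp_measurable_on_sets_lebesgue[OF c]) auto
  show "{-1..0::real} \<in> sets lebesgue" by auto
  show "bounded ((\<lambda>x. (1 - x) powr a) ` {-1..0::real})"
    by (intro compact_imp_bounded compact_continuous_image c) auto
  show "(\<lambda>x. (1 + x) powr b) absolutely_integrable_on {-1..0::real}"
    by (rule absolutely_integrable_integrable_bound[OF _ int_shift[OF assms(2)] int_shift[OF assms(2)]]) auto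
qed


locale jw = fixes \<alpha> \<beta> :: real assumes ab: "\<alpha> > -1" "\<beta> > -1" begin

lemma w_nonneg: "jacobi_weight \<alpha> \<beta> x \<ge> 0"
  by (simp add: jacobi_weight_def)

lemma w_int: "jacobi_weight \<alpha> \<beta> integrable_on {-1..1}"
proof (rule Henstock_Kurzweil_Integration.integrable_combine[where c=0])
  show "jacobi_weight \<alpha> \<beta> integrable_on {-1..0}"
    using abs_int_half[OF ab] unfolding jacobi_weight_def absolutely_integrable_on_def by blast
  have "(\<lambda>x. (1 - x) powr \<beta> * (1 + x) powr \<alpha>) integrable_on {-1..-0}"
    using abs_int_half[OF ab(2,1)] unfolding absolutely_integrable_on_def by simp
  then have "(\<lambda>x. jacobi_weight \<alpha> \<beta> (-x)) integrable_on {-1..-0}"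
    by (simp add: jacobi_weight_def mult.commute)
  then show "jacobi_weight \<alpha> \<beta> integrable_on {0..1}"
    using Henstock_Kurzweil_Integration.integrable_reflect_real by blast
qed auto

lemma w_abs: "jacobi_weight \<alpha> \<beta> absolutely_integrable_on {-1..1}"
  by (rule absolutely_integrable_integrable_bound[OF _ w_int w_int]) (simp add: w_nonneg)

lemma int_cont:
  assumes "continuous_on {-1..1} f"
  shows "(\<lambda>x. f x * jacobi_weight \<alpha> \<beta> x) integrable_on {-1..1}"
proof -
  have "(\<lambda>x. f x * jacobi_weight \<alpha> \<beta> x) absolutely_integrable_on {-1..1}"
  proof (rule absolutely_integrable_bounded_measurable_product_real[OF _ _ _ w_abs])
    show "f \<in> borel_measurable (lebesgue_on {-1..1})"
      by (rule continuous_imp_measurable_on_sets_lebesgue[OF assms]) auto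
    show "bounded (f ` {-1..1})"
      by (intro compact_imp_bounded compact_continuous_image assms) auto
  qed auto
  then show ?thesis unfolding absolutely_integrable_on_def by blast
qed

definition WW where "WW = integral {-1..1} (jacobi_weight \<alpha> \<beta>)"

lemma WW_nonneg: "WW \<ge> 0"
  unfolding WW_def by (rule integral_nonneg[OF w_int]) (simp add: w_nonneg)

lemma int_bound:
  assumes "continuous_on {-1..1} f" "\<And>x. x \<in> {-1..1} \<Longrightarrow> \<bar>f x\<bar> \<le> B"
  shows "\<bar>integral {-1..1} (\<lambda>x. f x * jacobi_weight \<alpha> \<beta> x)\<bar> \<le> B * WW"
proof -
  have "norm (integral {-1..1} (\<lambda>x. f x * jacobi_weight \<alpha> \<beta> x))
        \<le> integral {-1..1} (\<lambda>x. B * jacobi_weight \<alpha> \<beta> x)"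
  proof (rule integral_norm_bound_integral[OF int_cont[OF assms(1)]])
    show "(\<lambda>x. B * jacobi_weight \<alpha> \<beta> x) integrable_on {-1..1}"
      using integrable_cmul[OF w_int, of B] by simp
    fix x :: real assume "x \<in> {-1..1}"
    then show "norm (f x * jacobi_weight \<alpha> \<beta> x) \<le> B * jacobi_weight \<alpha> \<beta> x"
      using assms(2)[of x] w_nonneg[of x]
      by (simp add: abs_mult mult_right_mono)
  qed
  then show ?thesis by (simp add: WW_def)
qed

lemma param_cont:
  fixes k :: "real \<Rightarrow> real \<Rightarrow> real"
  assumes S: "compact S" and k: "continuous_on (S \<times> {-1..1}) (\<lambda>(s,y). k s y)"
  shows "continuous_on S (\<lambda>s. integral {-1..1} (\<lambda>y. k s y * jacobi_weight \<alpha> \<beta> y))"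
proof -
  have kc: "continuous_on {-1..1} (k s)" if "s \<in> S" for s
  proof -
    have "continuous_on {-1..1} ((\<lambda>(s,y). k s y) \<circ> (\<lambda>y. (s, y)))"
      by (rule continuous_on_compose[OF _ continuous_on_subset[OF k]])
         (use that in \<open>auto intro!: continuous_intros\<close>)
    then show ?thesis by (simp add: o_def)
  qed
  have uc: "uniformly_continuous_on (S \<times> {-1..1}) (\<lambda>(s,y). k s y)"
    by (intro compact_uniformly_continuous k compact_Times S) auto
  show ?thesis
    unfolding continuous_on_iff
  proof (intro ballI allI impI)
    fix s e :: real assume s: "s \<in> S" and e: "e > 0"
    define e' where "e' = e / (WW + 1)"
    have e': "e' > 0" using e WW_nonneg by (simp add: e'_def)
    obtain d where d: "d > 0" and dd: "\<And>x x'. x \<in> S \<times> {-1..1} \<Longrightarrow> x' \<in> S \<times> {-1..1} \<Longrightarrow>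
        dist x' x < d \<Longrightarrow> dist ((\<lambda>(s,y). k s y) x') ((\<lambda>(s,y). k s y) x) < e'"
      using uc e' unfolding uniformly_continuous_on_def by metis
    show "\<exists>d>0. \<forall>s'\<in>S. dist s' s < d \<longrightarrow>
            dist (integral {-1..1} (\<lambda>y. k s' y * jacobi_weight \<alpha> \<beta> y))
                 (integral {-1..1} (\<lambda>y. k s y * jacobi_weight \<alpha> \<beta> y)) < e"
    proof (intro exI[of _ d] conjI ballI impI d)
      fix s' assume s': "s' \<in> S" and ds: "dist s' s < d"
      have bnd: "\<bar>k s' y - k s y\<bar> \<le> e'" if "y \<in> {-1..1}" for y
        using dd[of "(s,y)" "(s',y)"] s s' that ds by (auto simp: dist_Pair_Pair dist_real_def)
      have "integral {-1..1} (\<lambda>y. k s' y * jacobi_weight \<alpha> \<beta> y) - integral {-1..1} (\<lambda>y. k s y * jacobi_weight \<alpha> \<beta> y)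
          = integral {-1..1} (\<lambda>y. (k s' y - k s y) * jacobi_weight \<alpha> \<beta> y)"
        by (subst integral_diff[symmetric]) (auto intro!: int_cont kc s s' simp: algebra_simps)
      also have "\<bar>\<dots>\<bar> \<le> e' * WW"
        by (rule int_bound) (auto intro!: continuous_intros kc s s' bnd)
      also have "\<dots> < e" using e WW_nonneg by (simp add: e'_def field_simps)
      finally show "dist (integral {-1..1} (\<lambda>y. k s' y * jacobi_weight \<alpha> \<beta> y))
                 (integral {-1..1} (\<lambda>y. k s y * jacobi_weight \<alpha> \<beta> y)) < e"
        by (simp add: dist_real_def)
    qed
  qed
qed

end

lemma quad_deriv:
  fixes f :: "real \<Rightarrow> real"
  assumes r: "r > 0" and K: "K \<ge> 0"
    and b: "\<And>s. \<bar>s - s0\<bar> < r \<Longrightarrow> \<bar>f s - f s0 - (s - s0) * D\<bar> \<le> K * (s - s0)^2"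
  shows "(f has_real_derivative D) (at s0)"
  unfolding has_field_derivative_iff LIM_eq
proof (intro allI impI)
  fix e :: real assume e: "e > 0"
  show "\<exists>d>0. \<forall>x. x \<noteq> s0 \<and> norm (x - s0) < d \<longrightarrow> norm ((f x - f s0) / (x - s0) - D) < e"
  proof (intro exI[of _ "min r (e / (K + 1))"] conjI allI impI)
    show "0 < min r (e / (K + 1))" using r e K by auto
    fix x assume x: "x \<noteq> s0 \<and> norm (x - s0) < min r (e / (K + 1))"
    then have x0: "x - s0 \<noteq> 0" and xr: "\<bar>x - s0\<bar> < r" and xe: "\<bar>x - s0\<bar> < e / (K+1)" by auto
    have "(f x - f s0) / (x - s0) - D = (f x - f s0 - (x - s0) * D) / (x - s0)"
      using x0 by (simp add: field_simps)
    also have "\<bar>\<dots>\<bar> \<le> K * (x - s0)^2 / \<bar>x - s0\<bar>"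
      using b[OF xr] x0 by (simp add: abs_divide divide_right_mono)
    also have "\<dots> = K * \<bar>x - s0\<bar>"
    proof -
      have "(x - s0)^2 = \<bar>x - s0\<bar> * \<bar>x - s0\<bar>" by (simp add: power2_eq_square)
      then have "K * (x - s0)^2 / \<bar>x - s0\<bar> = K * (\<bar>x - s0\<bar> * \<bar>x - s0\<bar>) / \<bar>x - s0\<bar>" by (simp only:)
      also have "\<dots> = K * \<bar>x - s0\<bar>" using x0 by (simp only: abs_mult_self_eq) (auto simp: abs_if field_simps power2_eq_square)
      finally show ?thesis .
    qed
    also have "\<dots> \<le> K * (e / (K+1))" using xe K by (intro mult_left_mono) auto
    also have "\<dots> < e" using e K by (simp add: field_simps)
    finally show "norm ((f x - f s0) / (x - s0) - D) < e" by simp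
  qed
qed

lemma exp_quad_bound:
  fixes a b :: real
  shows   "\<bar>exp b - exp a - (b - a) * exp a\<bar> \<le> (b - a)^2 * exp (a + \<bar>b - a\<bar>)"
proof -
  obtain t where t: "\<bar>t\<bar> \<le> \<bar>b - a\<bar>" and e: "exp (b - a) = (\<Sum>m<2. (b - a)^m / fact m) + exp t / fact 2 * (b - a)^2"
    using Maclaurin_exp_le[of "b - a" 2] by blast
  have e2: "exp (b - a) = 1 + (b - a) + exp t / 2 * (b - a)^2"
    using e by (simp add: numeral_2_eq_2)
  have "exp b = exp a * exp (b - a)" by (simp add: exp_diff)
  then have "exp b - exp a - (b - a) * exp a = exp a * exp t / 2 * (b - a)^2"
    using e2 by (simp add: algebra_simps)
  also have "\<bar>\<dots>\<bar> = exp (a + t) / 2 * (b - a)^2" by (simp add: exp_add)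
  also have "\<dots> \<le> exp (a + \<bar>b - a\<bar>) * (b - a)^2"
  proof -
    have "exp (a + t) \<le> exp (a + \<bar>b - a\<bar>)" using t by simp
    then have "exp (a + t) / 2 \<le> exp (a + \<bar>b - a\<bar>)"
      using exp_gt_zero[of "a+t"] by linarith
    then show ?thesis by (intro mult_right_mono) auto
  qed
  finally show ?thesis by (simp add: mult.commute)
qed

lemma cont_bound:
  fixes f :: "'a::topological_space \<Rightarrow> real"
  assumes "continuous_on S f" "compact S"
  shows "\<exists>B\<ge>0. \<forall>x\<in>S. \<bar>f x\<bar> \<le> B"
proof -
  have "bounded (f ` S)" by (intro compact_imp_bounded compact_continuous_image assms)
  then obtain B where "B > 0" "\<forall>x\<in>f ` S. norm x \<le> B" using bounded_pos by blast
  then show ?thesis by (intro exI[of _ B]) auto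
qed

lemma cont_snd:
  assumes "continuous_on T \<phi>"
  shows "continuous_on (S \<times> T) (\<lambda>p. \<phi> (snd p))"
  by (rule continuous_on_compose2[OF assms continuous_on_snd]) auto

lemma cont_fst:
  assumes "continuous_on S \<phi>"
  shows "continuous_on (S \<times> T) (\<lambda>p. \<phi> (fst p))"
  by (rule continuous_on_compose2[OF assms continuous_on_fst]) auto


lemma exp_series_bound:
  fixes t x y :: real
  assumes "x \<in> {-1..1}" "y \<in> {-1..1}"
  shows "\<bar>exp (t * (x * y - 1)) - (\<Sum>k<N. (exp (-t) * t^k / fact k) * (x * y)^k)\<bar>
         \<le> exp (-t) * exp \<bar>t\<bar> * (\<bar>t\<bar>^N / fact N)"
proof -
  define z where "z = t * (x * y)"
  have xy: "\<bar>x * y\<bar> \<le> 1" using assms by (auto simp: abs_mult intro: mult_le_one)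
  have zt: "\<bar>z\<bar> \<le> \<bar>t\<bar>" unfolding z_def abs_mult using xy by (simp add: mult_left_le)
  obtain th where th: "\<bar>th\<bar> \<le> \<bar>z\<bar>" and e: "exp z = (\<Sum>m<N. z^m / fact m) + exp th / fact N * z^N"
    using Maclaurin_exp_le[of z N] by blast
  have s: "(\<Sum>k<N. (exp (-t) * t^k / fact k) * (x * y)^k) = exp (-t) * (\<Sum>m<N. z^m / fact m)"
    unfolding z_def by (simp add: sum_distrib_left power_mult_distrib algebra_simps)
  have "exp (t * (x * y - 1)) = exp (-t) * exp z"
    unfolding z_def by (simp add: exp_add[symmetric] algebra_simps)
  then have "exp (t * (x * y - 1)) - (\<Sum>k<N. (exp (-t) * t^k / fact k) * (x * y)^k)
        = exp (-t) * (exp th / fact N * z^N)"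
    using e s by (simp add: algebra_simps)
  also have "\<bar>\<dots>\<bar> = exp (-t) * (exp th * (\<bar>z\<bar>^N / fact N))"
    by (simp add: abs_mult power_abs)
  also have "\<dots> \<le> exp (-t) * (exp \<bar>t\<bar> * (\<bar>t\<bar>^N / fact N))"
    using th zt
    by (intro mult_left_mono mult_mono divide_right_mono power_mono) auto
  finally show ?thesis by (simp add: mult.assoc)
qed

lemma abs3: fixes L R P :: real shows "\<bar>L - R\<bar> \<le> \<bar>L - P\<bar> + \<bar>R - P\<bar>"
  by linarith

lemma small0: fixes x :: real assumes "\<And>e. e > 0 \<Longrightarrow> \<bar>x\<bar> < e" shows "x = 0"
  using assms[of "\<bar>x\<bar>"] by force

lemma int_cmul: "f integrable_on S \<Longrightarrow> (\<lambda>x. (c::real) * f x) integrable_on S"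
  using integrable_cmul[of f S c] by simp

context jw begin

lemma F_cont:
  assumes "continuous_on {-1..1} \<phi>" "compact S"
  shows "continuous_on S (F_op \<alpha> \<beta> t \<phi>)"
proof -
  have "continuous_on (S \<times> {-1..1}) (\<lambda>p. exp (t * (fst p * snd p - 1)) * \<phi> (snd p))"
    by (intro continuous_intros cont_snd assms)
  then have "continuous_on (S \<times> {-1..1}) (\<lambda>(x,y). exp (t * (x * y - 1)) * \<phi> y)"
    by (simp add: case_prod_beta)
  from param_cont[OF assms(2) this] show ?thesis
    unfolding F_op_def by (simp add: o_def)
qed

definition mom where "mom k \<phi> = integral {-1..1} (\<lambda>y. y^k * \<phi> y * jacobi_weight \<alpha> \<beta> y)"

lemma inner_poly:
  assumes "continuous_on {-1..1} \<phi>"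
  shows "integral {-1..1} (\<lambda>y. (\<Sum>k<N. a k * (x*y)^k) * \<phi> y * jacobi_weight \<alpha> \<beta> y)
        = (\<Sum>k<N. a k * x^k * mom k \<phi>)"
proof -
  have "(\<lambda>y. (\<Sum>k<N. a k * (x*y)^k) * \<phi> y * jacobi_weight \<alpha> \<beta> y)
       = (\<lambda>y. \<Sum>k<N. (a k * x^k) * (y^k * \<phi> y * jacobi_weight \<alpha> \<beta> y))"
    unfolding sum_distrib_right by (intro ext sum.cong refl) (simp add: power_mult_distrib mult_ac)
  moreover have "integral {-1..1} (\<lambda>y. \<Sum>k<N. (a k * x^k) * (y^k * \<phi> y * jacobi_weight \<alpha> \<beta> y))
      = (\<Sum>k<N. integral {-1..1} (\<lambda>y. (a k * x^k) * (y^k * \<phi> y * jacobi_weight \<alpha> \<beta> y)))"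
    by (rule Henstock_Kurzweil_Integration.integral_sum)
       (auto intro!: int_cmul int_cont continuous_intros assms)
  ultimately show ?thesis by (simp add: mom_def)
qed

lemma outer_poly:
  assumes "continuous_on {-1..1} \<theta>"
  shows "integral {-1..1} (\<lambda>x. \<theta> x * (\<Sum>k<N. a k * x^k * M k) * jacobi_weight \<alpha> \<beta> x)
        = (\<Sum>k<N. a k * M k * mom k \<theta>)"
proof -
  have "(\<lambda>x. \<theta> x * (\<Sum>k<N. a k * x^k * M k) * jacobi_weight \<alpha> \<beta> x)
       = (\<lambda>x. \<Sum>k<N. (a k * M k) * (x^k * \<theta> x * jacobi_weight \<alpha> \<beta> x))"
    unfolding sum_distrib_right sum_distrib_left by (intro ext sum.cong refl) (simp add: mult_ac)
  moreover have "integral {-1..1} (\<lambda>x. \<Sum>k<N. (a k * M k) * (x^k * \<theta> x * jacobi_weight \<alpha> \<beta> x))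
      = (\<Sum>k<N. integral {-1..1} (\<lambda>x. (a k * M k) * (x^k * \<theta> x * jacobi_weight \<alpha> \<beta> x)))"
    by (rule Henstock_Kurzweil_Integration.integral_sum)
       (auto intro!: int_cmul int_cont continuous_intros assms)
  ultimately show ?thesis by (simp add: mom_def)
qed

lemma A_approx:
  assumes phi: "continuous_on {-1..1} \<phi>" and chi: "continuous_on {-1..1} \<theta>"
    and Bp: "\<And>y. y \<in> {-1..1} \<Longrightarrow> \<bar>\<phi> y\<bar> \<le> Bp" and Bc: "\<And>y. y \<in> {-1..1} \<Longrightarrow> \<bar>\<theta> y\<bar> \<le> Bc"
    and dl: "\<And>x y. x \<in> {-1..1} \<Longrightarrow> y \<in> {-1..1} \<Longrightarrow> \<bar>exp (t * (x * y - 1)) - (\<Sum>k<N. a k * (x*y)^k)\<bar> \<le> d"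
  shows "\<bar>integral {-1..1} (\<lambda>x. \<theta> x * F_op \<alpha> \<beta> t \<phi> x * jacobi_weight \<alpha> \<beta> x)
          - (\<Sum>k<N. a k * mom k \<phi> * mom k \<theta>)\<bar> \<le> Bc * (d * Bp * WW) * WW"
proof -
  define inn where "inn x = (\<Sum>k<N. a k * x^k * mom k \<phi>)" for x
  have Bp0: "Bp \<ge> 0" using Bp[of 0] by auto
  have d0: "d \<ge> 0" using dl[of 0 0] by auto
  have Bc0: "Bc \<ge> 0" using Bc[of 0] by auto
  have Fc: "continuous_on {-1..1} (F_op \<alpha> \<beta> t \<phi>)" by (rule F_cont[OF phi]) auto
  have ic: "continuous_on {-1..1} inn" unfolding inn_def by (intro continuous_intros)
  have Fd: "\<bar>F_op \<alpha> \<beta> t \<phi> x - inn x\<bar> \<le> d * Bp * WW" if x: "x \<in> {-1..1}" for x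
  proof -
    have "F_op \<alpha> \<beta> t \<phi> x - inn x = integral {-1..1} (\<lambda>y. exp (t * (x * y - 1)) * \<phi> y * jacobi_weight \<alpha> \<beta> y)
        - integral {-1..1} (\<lambda>y. (\<Sum>k<N. a k * (x*y)^k) * \<phi> y * jacobi_weight \<alpha> \<beta> y)"
      unfolding F_op_def inn_def inner_poly[OF phi] ..
    also have "\<dots> = integral {-1..1} (\<lambda>y. ((exp (t * (x * y - 1)) - (\<Sum>k<N. a k * (x*y)^k)) * \<phi> y) * jacobi_weight \<alpha> \<beta> y)"
    proof -
      have i1: "(\<lambda>y. exp (t * (x * y - 1)) * \<phi> y * jacobi_weight \<alpha> \<beta> y) integrable_on {-1..1}"
        by (intro int_cont continuous_intros phi)
      have i2: "(\<lambda>y. (\<Sum>k<N. a k * (x*y)^k) * \<phi> y * jacobi_weight \<alpha> \<beta> y) integrable_on {-1..1}"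
        by (intro int_cont continuous_intros phi)
      show ?thesis
        by (subst Henstock_Kurzweil_Integration.integral_diff[OF i1 i2, symmetric]) (simp add: algebra_simps)
    qed
    also have "\<bar>\<dots>\<bar> \<le> (d * Bp) * WW"
    proof (rule int_bound)
      show "continuous_on {-1..1} (\<lambda>y. (exp (t * (x * y - 1)) - (\<Sum>k<N. a k * (x*y)^k)) * \<phi> y)"
        by (intro continuous_intros phi)
      fix y :: real assume y: "y \<in> {-1..1}"
      show "\<bar>(exp (t * (x * y - 1)) - (\<Sum>k<N. a k * (x*y)^k)) * \<phi> y\<bar> \<le> d * Bp"
        unfolding abs_mult by (intro mult_mono dl x y Bp d0) auto
    qed
    finally show ?thesis .
  qed
  have "integral {-1..1} (\<lambda>x. \<theta> x * F_op \<alpha> \<beta> t \<phi> x * jacobi_weight \<alpha> \<beta> x)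
          - (\<Sum>k<N. a k * mom k \<phi> * mom k \<theta>)
      = integral {-1..1} (\<lambda>x. \<theta> x * F_op \<alpha> \<beta> t \<phi> x * jacobi_weight \<alpha> \<beta> x)
          - integral {-1..1} (\<lambda>x. \<theta> x * inn x * jacobi_weight \<alpha> \<beta> x)"
    unfolding inn_def outer_poly[OF chi] ..
  also have "\<dots> = integral {-1..1} (\<lambda>x. (\<theta> x * (F_op \<alpha> \<beta> t \<phi> x - inn x)) * jacobi_weight \<alpha> \<beta> x)"
  proof -
    have i1: "(\<lambda>x. \<theta> x * F_op \<alpha> \<beta> t \<phi> x * jacobi_weight \<alpha> \<beta> x) integrable_on {-1..1}"
      by (intro int_cont continuous_intros chi Fc)
    have i2: "(\<lambda>x. \<theta> x * inn x * jacobi_weight \<alpha> \<beta> x) integrable_on {-1..1}"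
      by (intro int_cont continuous_intros chi ic)
    show ?thesis
      by (subst Henstock_Kurzweil_Integration.integral_diff[OF i1 i2, symmetric]) (simp add: algebra_simps)
  qed
  also have "\<bar>\<dots>\<bar> \<le> (Bc * (d * Bp * WW)) * WW"
  proof (rule int_bound)
    show "continuous_on {-1..1} (\<lambda>x. \<theta> x * (F_op \<alpha> \<beta> t \<phi> x - inn x))"
      by (intro continuous_intros chi Fc ic)
    fix x :: real assume x: "x \<in> {-1..1}"
    show "\<bar>\<theta> x * (F_op \<alpha> \<beta> t \<phi> x - inn x)\<bar> \<le> Bc * (d * Bp * WW)"
      unfolding abs_mult by (intro mult_mono Fd x Bc Bc0) auto
  qed
  finally show ?thesis .
qed

lemma F_sym:
  assumes phi: "continuous_on {-1..1} \<phi>" and chi: "continuous_on {-1..1} \<theta>"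
  shows "integral {-1..1} (\<lambda>x. \<theta> x * F_op \<alpha> \<beta> t \<phi> x * jacobi_weight \<alpha> \<beta> x)
       = integral {-1..1} (\<lambda>x. \<phi> x * F_op \<alpha> \<beta> t \<theta> x * jacobi_weight \<alpha> \<beta> x)"
    (is "?L = ?R")
proof -
  obtain Bp where Bp0: "Bp \<ge> 0" and Bp: "\<forall>y\<in>{-1..1}. \<bar>\<phi> y\<bar> \<le> Bp"
    using cont_bound[OF phi] by auto
  obtain Bc where Bc0: "Bc \<ge> 0" and Bc: "\<forall>y\<in>{-1..1}. \<bar>\<theta> y\<bar> \<le> Bc"
    using cont_bound[OF chi] by auto
  define C where "C = Bc * Bp * WW * WW * (exp (-t) * exp \<bar>t\<bar>)"
  have C0: "C \<ge> 0" unfolding C_def using Bp0 Bc0 WW_nonneg by simp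
  have "\<bar>?L - ?R\<bar> < e" if e: "e > 0" for e
  proof -
    have "(\<lambda>n. inverse (fact n) * \<bar>t\<bar>^n) \<longlonglongrightarrow> 0"
      by (rule summable_LIMSEQ_zero[OF summable_exp])
    moreover have "e / (2 * C + 1) > 0" using e C0 by simp
    ultimately obtain N where N: "norm (inverse (fact N) * \<bar>t\<bar>^N - 0) < e / (2 * C + 1)"
      unfolding LIMSEQ_iff by blast
    define q where "q = \<bar>t\<bar>^N / fact N"
    have q0: "q \<ge> 0" unfolding q_def by simp
    have qe: "q < e / (2 * C + 1)" using N by (simp add: q_def field_simps)
    define a where "a k = exp (-t) * t^k / fact k" for k :: nat
    define d where "d = exp (-t) * exp \<bar>t\<bar> * q"
    have dl: "\<And>x y. x \<in> {-1..1} \<Longrightarrow> y \<in> {-1..1} \<Longrightarrow> \<bar>exp (t * (x * y - 1)) - (\<Sum>k<N. a k * (x*y)^k)\<bar> \<le> d"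
      unfolding a_def d_def q_def by (rule exp_series_bound)
    have 1: "\<bar>?L - (\<Sum>k<N. a k * mom k \<phi> * mom k \<theta>)\<bar> \<le> Bc * (d * Bp * WW) * WW"
      using A_approx[OF phi chi, where Bp=Bp and Bc=Bc and t=t and N=N and a=a and d=d] Bp Bc dl
      by blast
    have 2: "\<bar>?R - (\<Sum>k<N. a k * mom k \<theta> * mom k \<phi>)\<bar> \<le> Bp * (d * Bc * WW) * WW"
      using A_approx[OF chi phi, where Bp=Bc and Bc=Bp and t=t and N=N and a=a and d=d] Bp Bc dl
      by blast
    have s: "(\<Sum>k<N. a k * mom k \<theta> * mom k \<phi>) = (\<Sum>k<N. a k * mom k \<phi> * mom k \<theta>)"
      by (simp add: mult.commute mult.left_commute)
    have "\<bar>?L - ?R\<bar> \<le> Bc * (d * Bp * WW) * WW + Bp * (d * Bc * WW) * WW"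
    proof -
      have "\<bar>?L - ?R\<bar> \<le> \<bar>?L - (\<Sum>k<N. a k * mom k \<phi> * mom k \<theta>)\<bar> + \<bar>?R - (\<Sum>k<N. a k * mom k \<theta> * mom k \<phi>)\<bar>"
        unfolding s by (rule abs3)
      then show ?thesis using 1 2 by (rule order_trans[OF _ add_mono])
    qed
    also have "\<dots> = 2 * C * q" unfolding C_def d_def by (simp add: mult_ac)
    also have "\<dots> \<le> 2 * C * (e / (2 * C + 1))" using qe C0 by (intro mult_left_mono) auto
    also have "\<dots> < e" using C0 e by (simp add: field_simps)
    finally show ?thesis .
  qed
  then have "?L - ?R = 0" by (rule small0)
  then show ?thesis by simp
qed

end

context jw begin

lemma quad_int:
  assumes c1: "continuous_on {-1..1} g1" and c2: "continuous_on {-1..1} g2" and c3: "continuous_on {-1..1} g3"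
    and b: "\<And>y. y \<in> {-1..1} \<Longrightarrow> \<bar>g1 y - g2 y - h * g3 y\<bar> \<le> B"
  shows "\<bar>integral {-1..1} (\<lambda>y. g1 y * jacobi_weight \<alpha> \<beta> y) - integral {-1..1} (\<lambda>y. g2 y * jacobi_weight \<alpha> \<beta> y)
          - h * integral {-1..1} (\<lambda>y. g3 y * jacobi_weight \<alpha> \<beta> y)\<bar> \<le> B * WW"
proof -
  have i1: "(\<lambda>y. g1 y * jacobi_weight \<alpha> \<beta> y) integrable_on {-1..1}" by (rule int_cont[OF c1])
  have i2: "(\<lambda>y. g2 y * jacobi_weight \<alpha> \<beta> y) integrable_on {-1..1}" by (rule int_cont[OF c2])
  have i3: "(\<lambda>y. h * (g3 y * jacobi_weight \<alpha> \<beta> y)) integrable_on {-1..1}" by (rule int_cmul[OF int_cont[OF c3]])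
  have i12: "(\<lambda>y. g1 y * jacobi_weight \<alpha> \<beta> y - g2 y * jacobi_weight \<alpha> \<beta> y) integrable_on {-1..1}"
    by (rule integrable_diff[OF i1 i2])
  have "integral {-1..1} (\<lambda>y. g1 y * jacobi_weight \<alpha> \<beta> y) - integral {-1..1} (\<lambda>y. g2 y * jacobi_weight \<alpha> \<beta> y)
          - h * integral {-1..1} (\<lambda>y. g3 y * jacobi_weight \<alpha> \<beta> y)
      = integral {-1..1} (\<lambda>y. g1 y * jacobi_weight \<alpha> \<beta> y - g2 y * jacobi_weight \<alpha> \<beta> y)
          - integral {-1..1} (\<lambda>y. h * (g3 y * jacobi_weight \<alpha> \<beta> y))"
    by (simp add: Henstock_Kurzweil_Integration.integral_diff[OF i1 i2])
  also have "\<dots> = integral {-1..1} (\<lambda>y. (g1 y - g2 y - h * g3 y) * jacobi_weight \<alpha> \<beta> y)"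
    by (subst Henstock_Kurzweil_Integration.integral_diff[OF i12 i3, symmetric]) (simp add: algebra_simps)
  also have "\<bar>\<dots>\<bar> \<le> B * WW"
    by (rule int_bound) (auto intro!: continuous_intros c1 c2 c3 b)
  finally show ?thesis .
qed

definition Gf where "Gf c \<phi> x = integral {-1..1} (\<lambda>y. (x*y - 1) * exp (c*(x*y-1)) * \<phi> y * jacobi_weight \<alpha> \<beta> y)"
definition Fdf where "Fdf c \<phi> x = integral {-1..1} (\<lambda>y. c * y * exp (c*(x*y-1)) * \<phi> y * jacobi_weight \<alpha> \<beta> y)"

lemma Gf_cont:
  assumes "continuous_on {-1..1} \<phi>" "compact S"
  shows "continuous_on S (Gf c \<phi>)"
proof -
  have "continuous_on (S \<times> {-1..1}) (\<lambda>p. (fst p * snd p - 1) * exp (c * (fst p * snd p - 1)) * \<phi> (snd p))"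
    by (intro continuous_intros cont_snd assms)
  then have "continuous_on (S \<times> {-1..1}) (\<lambda>(x,y). (x * y - 1) * exp (c * (x * y - 1)) * \<phi> y)"
    by (simp add: case_prod_beta)
  from param_cont[OF assms(2) this] show ?thesis
    unfolding Gf_def by (simp add: o_def)
qed

lemma Fdf_cont:
  assumes "continuous_on {-1..1} \<phi>" "compact S"
  shows "continuous_on S (Fdf c \<phi>)"
proof -
  have "continuous_on (S \<times> {-1..1}) (\<lambda>p. c * snd p * exp (c * (fst p * snd p - 1)) * \<phi> (snd p))"
    by (intro continuous_intros cont_snd assms)
  then have "continuous_on (S \<times> {-1..1}) (\<lambda>(x,y). c * y * exp (c * (x * y - 1)) * \<phi> y)"
    by (simp add: case_prod_beta)
  from param_cont[OF assms(2) this] show ?thesis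
    unfolding Fdf_def by (simp add: o_def)
qed

lemma G_split:
  assumes phi: "continuous_on {-1..1} \<phi>" and c: "c \<noteq> 0"
  shows "Gf c \<phi> x = x / c * Fdf c \<phi> x - F_op \<alpha> \<beta> c \<phi> x"
proof -
  have i1: "(\<lambda>y. (x / c) * (c * y * exp (c*(x*y-1)) * \<phi> y * jacobi_weight \<alpha> \<beta> y)) integrable_on {-1..1}"
    by (intro int_cmul int_cont continuous_intros phi)
  have i2: "(\<lambda>y. exp (c * (x * y - 1)) * \<phi> y * jacobi_weight \<alpha> \<beta> y) integrable_on {-1..1}"
    by (intro int_cont continuous_intros phi)
  have "x / c * Fdf c \<phi> x - F_op \<alpha> \<beta> c \<phi> x
     = integral {-1..1} (\<lambda>y. (x / c) * (c * y * exp (c*(x*y-1)) * \<phi> y * jacobi_weight \<alpha> \<beta> y))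
       - integral {-1..1} (\<lambda>y. exp (c * (x * y - 1)) * \<phi> y * jacobi_weight \<alpha> \<beta> y)"
    unfolding Fdf_def F_op_def by (simp only: Henstock_Kurzweil_Integration.integral_mult_right)
  also have "\<dots> = integral {-1..1} (\<lambda>y. (x / c) * (c * y * exp (c*(x*y-1)) * \<phi> y * jacobi_weight \<alpha> \<beta> y)
       - exp (c * (x * y - 1)) * \<phi> y * jacobi_weight \<alpha> \<beta> y)"
    by (rule Henstock_Kurzweil_Integration.integral_diff[OF i1 i2, symmetric])
  also have "\<dots> = Gf c \<phi> x"
    unfolding Gf_def using c by (intro integral_cong) (simp add: field_simps)
  finally show ?thesis by simp
qed

lemma F_deriv:
  assumes phi: "continuous_on {-1..1} \<phi>" and c: "c > 0" and x: "x \<in> {-1..1}"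
  shows "(F_op \<alpha> \<beta> c \<phi> has_real_derivative Fdf c \<phi> x) (at x)"
proof -
  obtain B where B0: "B \<ge> 0" and B: "\<forall>y\<in>{-1..1}. \<bar>\<phi> y\<bar> \<le> B"
    using cont_bound[OF phi] by auto
  show ?thesis
  proof (rule quad_deriv[where r=1 and K="c^2 * exp c * B * WW"])
    show "0 \<le> c^2 * exp c * B * WW" using B0 WW_nonneg by simp
    fix s :: real assume s: "\<bar>s - x\<bar> < 1"
    have "\<bar>F_op \<alpha> \<beta> c \<phi> s - F_op \<alpha> \<beta> c \<phi> x - (s - x) * Fdf c \<phi> x\<bar> \<le> (c^2 * exp c * (s - x)^2 * B) * WW"
      unfolding F_op_def Fdf_def
    proof (rule quad_int)
      show "continuous_on {-1..1} (\<lambda>y. exp (c * (s * y - 1)) * \<phi> y)" by (intro continuous_intros phi)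
      show "continuous_on {-1..1} (\<lambda>y. exp (c * (x * y - 1)) * \<phi> y)" by (intro continuous_intros phi)
      show "continuous_on {-1..1} (\<lambda>y. c * y * exp (c * (x * y - 1)) * \<phi> y)" by (intro continuous_intros phi)
      fix y :: real assume y: "y \<in> {-1..1}"
      define a where "a = c * (x * y - 1)"
      define b where "b = c * (s * y - 1)"
      have ba: "b - a = c * y * (s - x)" unfolding a_def b_def by (simp add: algebra_simps)
      have xy: "\<bar>x * y\<bar> \<le> 1" using x y by (auto simp: abs_mult intro: mult_le_one)
      have a0: "a \<le> 0" unfolding a_def using c xy by (simp add: mult_nonneg_nonpos)
      have yb: "\<bar>y\<bar> \<le> 1" using y by auto
      have ys: "\<bar>y\<bar> * \<bar>s - x\<bar> \<le> 1" using yb s by (intro mult_le_one) auto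
      have "\<bar>b - a\<bar> = c * (\<bar>y\<bar> * \<bar>s - x\<bar>)" unfolding ba using c by (simp add: abs_mult)
      also have "\<dots> \<le> c" using ys c by (intro mult_left_le) auto
      finally have bab: "\<bar>b - a\<bar> \<le> c" .
      have y2: "y^2 \<le> 1" using yb by (simp add: abs_le_square_iff[of y 1, simplified])
      have "(b - a)^2 = (c^2 * y^2) * (s - x)^2" unfolding ba by (simp add: power_mult_distrib)
      also have "\<dots> \<le> c^2 * (s - x)^2"
        using y2 by (intro mult_right_mono mult_left_le) auto
      finally have ba2: "(b - a)^2 \<le> c^2 * (s - x)^2" .
      have e1: "\<bar>exp b - exp a - (b - a) * exp a\<bar> \<le> (b - a)^2 * exp (a + \<bar>b - a\<bar>)"
        by (rule exp_quad_bound)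
      also have "\<dots> \<le> (c^2 * (s - x)^2) * exp c"
        using a0 bab ba2 by (intro mult_mono) auto
      finally have e2: "\<bar>exp b - exp a - (b - a) * exp a\<bar> \<le> c^2 * (s - x)^2 * exp c" .
      have "exp (c * (s * y - 1)) * \<phi> y - exp (c * (x * y - 1)) * \<phi> y - (s - x) * (c * y * exp (c * (x * y - 1)) * \<phi> y)
          = (exp b - exp a - (b - a) * exp a) * \<phi> y"
        unfolding ba by (simp add: a_def b_def algebra_simps)
      also have "\<bar>\<dots>\<bar> \<le> (c^2 * (s - x)^2 * exp c) * B"
        unfolding abs_mult using e2 B y by (intro mult_mono) auto
      finally show "\<bar>exp (c * (s * y - 1)) * \<phi> y - exp (c * (x * y - 1)) * \<phi> y - (s - x) * (c * y * exp (c * (x * y - 1)) * \<phi> y)\<bar>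
          \<le> c^2 * exp c * (s - x)^2 * B" by (simp add: mult_ac)
    qed
    then show "\<bar>F_op \<alpha> \<beta> c \<phi> s - F_op \<alpha> \<beta> c \<phi> x - (s - x) * Fdf c \<phi> x\<bar> \<le> c^2 * exp c * B * WW * (s - x)^2"
      by (simp add: mult_ac)
  qed auto
qed

end

context jw begin

lemma J_identity:
  assumes phi: "continuous_on {-1..1} \<phi>" and c: "c > 0" and m: "m \<noteq> 0"
    and eig: "\<And>x. x \<in> {-1..1} \<Longrightarrow> F_op \<alpha> \<beta> c \<phi> x = m * \<phi> x"
    and nrm: "integral {-1..1} (\<lambda>x. (\<phi> x)\<^sup>2 * jacobi_weight \<alpha> \<beta> x) = m\<^sup>2"
  shows "integral {-1..1} (\<lambda>x. \<phi> x * Gf c \<phi> x * jacobi_weight \<alpha> \<beta> x)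
       = m / c * I_int \<alpha> \<beta> \<phi> - m * m\<^sup>2"
proof -
  define K where "K x = x * \<phi> x * (Fdf c \<phi> x / m)" for x
  have Fc: "continuous_on {-1..1} (Fdf c \<phi>)" by (rule Fdf_cont[OF phi]) auto
  have Kc: "continuous_on {-1..1} K" unfolding K_def using m by (intro continuous_intros phi Fc) auto
  have dv: "deriv \<phi> x = Fdf c \<phi> x / m" if x: "x \<in> {-1<..<1}" for x
  proof -
    have "(F_op \<alpha> \<beta> c \<phi> has_real_derivative Fdf c \<phi> x) (at x)"
      by (rule F_deriv[OF phi c]) (use x in auto)
    then have "((\<lambda>s. F_op \<alpha> \<beta> c \<phi> s / m) has_real_derivative Fdf c \<phi> x / m) (at x)"
      by (rule DERIV_cdivide)
    then have "(\<phi> has_real_derivative Fdf c \<phi> x / m) (at x)"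
      by (rule has_field_derivative_transform_within_open[where S="{-1<..<1}"])
         (use x m eig in auto)
    then show ?thesis by (rule DERIV_imp_deriv)
  qed
  have I: "I_int \<alpha> \<beta> \<phi> = integral {-1..1} (\<lambda>x. K x * jacobi_weight \<alpha> \<beta> x)"
    unfolding I_int_def
  proof (rule integral_spike[where S="{-1,1}"])
    show "negligible {-1, 1::real}" by auto
    fix x assume "x \<in> {-1..1::real} - {-1, 1}"
    then have "x \<in> {-1<..<1}" by auto
    then show "K x * jacobi_weight \<alpha> \<beta> x = x * \<phi> x * deriv \<phi> x * jacobi_weight \<alpha> \<beta> x"
      unfolding K_def by (simp add: dv)
  qed
  have i1: "(\<lambda>x. m / c * (K x * jacobi_weight \<alpha> \<beta> x)) integrable_on {-1..1}"
    by (intro int_cmul int_cont Kc)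
  have i2: "(\<lambda>x. m * ((\<phi> x)\<^sup>2 * jacobi_weight \<alpha> \<beta> x)) integrable_on {-1..1}"
    by (intro int_cmul int_cont continuous_intros phi)
  have "integral {-1..1} (\<lambda>x. \<phi> x * Gf c \<phi> x * jacobi_weight \<alpha> \<beta> x)
      = integral {-1..1} (\<lambda>x. m / c * (K x * jacobi_weight \<alpha> \<beta> x) - m * ((\<phi> x)\<^sup>2 * jacobi_weight \<alpha> \<beta> x))"
  proof (rule Henstock_Kurzweil_Integration.integral_cong)
    fix x :: real assume x: "x \<in> {-1..1}"
    show "\<phi> x * Gf c \<phi> x * jacobi_weight \<alpha> \<beta> x
        = m / c * (K x * jacobi_weight \<alpha> \<beta> x) - m * ((\<phi> x)\<^sup>2 * jacobi_weight \<alpha> \<beta> x)"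
      unfolding G_split[OF phi less_imp_neq[OF c, symmetric]] eig[OF x] K_def using c m by (simp add: field_simps power2_eq_square)
  qed
  also have "\<dots> = m / c * I_int \<alpha> \<beta> \<phi> - m * m\<^sup>2"
    unfolding Henstock_Kurzweil_Integration.integral_diff[OF i1 i2] Henstock_Kurzweil_Integration.integral_mult_right I nrm ..
  finally show ?thesis .
qed

end

context jw begin

lemma main:
  fixes \<mu> :: "real \<Rightarrow> real" and \<psi> :: "real \<Rightarrow> real \<Rightarrow> real"
  assumes eigen: "\<And>c x. c > 0 \<Longrightarrow> x \<in> {-1..1} \<Longrightarrow> F_op \<alpha> \<beta> c (\<psi> c) x = \<mu> c * \<psi> c x"
    and nonzero: "\<And>c. c > 0 \<Longrightarrow> \<mu> c \<noteq> 0"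
    and normal: "\<And>c. c > 0 \<Longrightarrow>
        integral {-1..1} (\<lambda>x. (\<psi> c x)\<^sup>2 * jacobi_weight \<alpha> \<beta> x) = (\<mu> c)\<^sup>2"
    and psi_cont: "continuous_on ({0<..} \<times> {-1..1}) (\<lambda>(c, x). \<psi> c x)"
    and c: "c > 0"
  shows "(\<mu> has_real_derivative
           (1 / \<mu> c) * (I_int \<alpha> \<beta> (\<psi> c) / c - (\<mu> c)\<^sup>2)) (at c)"
proof -
  have psix: "continuous_on {-1..1} (\<psi> t)" if t: "t > 0" for t
  proof -
    have "continuous_on {-1..1} ((\<lambda>(c, x). \<psi> c x) \<circ> (\<lambda>x. (t, x)))"
      by (rule continuous_on_compose[OF _ continuous_on_subset[OF psi_cont]])
         (use t in \<open>auto intro!: continuous_intros\<close>)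
    then show ?thesis by (simp add: o_def)
  qed
  define S where "S = {c/2 .. 3*c/2}"
  have S0: "\<And>t. t \<in> S \<Longrightarrow> t > 0" unfolding S_def using c by auto
  have Sc: "compact S" unfolding S_def by simp
  have cS: "c \<in> S" unfolding S_def using c by auto
  have cint: "c \<in> interior S" unfolding S_def using c by auto
  have psiS: "continuous_on (S \<times> {-1..1}) (\<lambda>(t, x). \<psi> t x)"
    by (rule continuous_on_subset[OF psi_cont]) (use S0 in auto)
  obtain M where M0: "M \<ge> 0" and M': "\<forall>p\<in>S \<times> {-1..1}. \<bar>(\<lambda>(t, x). \<psi> t x) p\<bar> \<le> M"
    using cont_bound[OF psiS] Sc by (auto intro: compact_Times)
  have M: "\<bar>\<psi> t x\<bar> \<le> M" if "t \<in> S" "x \<in> {-1..1}" for t x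
    using M' that by auto
  have pc: "continuous_on {-1..1} (\<psi> c)" by (rule psix[OF c])
  define G where "G = Gf c (\<psi> c)"
  have Gc: "continuous_on {-1..1} G" unfolding G_def by (rule Gf_cont[OF pc]) auto
  define A where "A t = integral {-1..1} (\<lambda>x. \<psi> c x * \<psi> t x * jacobi_weight \<alpha> \<beta> x)" for t
  define J where "J t = integral {-1..1} (\<lambda>x. \<psi> t x * G x * jacobi_weight \<alpha> \<beta> x)" for t
  define H where "H t x = F_op \<alpha> \<beta> t (\<psi> c) x - F_op \<alpha> \<beta> c (\<psi> c) x - (t - c) * G x" for t x
  define R where "R t = integral {-1..1} (\<lambda>x. \<psi> t x * H t x * jacobi_weight \<alpha> \<beta> x)" for t
  have Hc: "continuous_on {-1..1} (H t)" for t
    unfolding H_def by (intro continuous_intros F_cont[OF pc] Gc) auto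

  have key: "(\<mu> t - \<mu> c) * A t = (t - c) * J t + R t" if t: "t \<in> S" for t
  proof -
    have t0: "t > 0" using S0 t by simp
    have pt: "continuous_on {-1..1} (\<psi> t)" by (rule psix[OF t0])
    have "integral {-1..1} (\<lambda>x. \<psi> c x * F_op \<alpha> \<beta> t (\<psi> t) x * jacobi_weight \<alpha> \<beta> x)
        = integral {-1..1} (\<lambda>x. \<mu> t * (\<psi> c x * \<psi> t x * jacobi_weight \<alpha> \<beta> x))"
      by (rule Henstock_Kurzweil_Integration.integral_cong) (simp add: eigen[OF t0] mult_ac)
    also have "\<dots> = \<mu> t * A t" unfolding A_def by simp
    finally have e1: "integral {-1..1} (\<lambda>x. \<psi> c x * F_op \<alpha> \<beta> t (\<psi> t) x * jacobi_weight \<alpha> \<beta> x) = \<mu> t * A t" .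
    have e2: "integral {-1..1} (\<lambda>x. \<psi> c x * F_op \<alpha> \<beta> t (\<psi> t) x * jacobi_weight \<alpha> \<beta> x)
        = integral {-1..1} (\<lambda>x. \<psi> t x * F_op \<alpha> \<beta> t (\<psi> c) x * jacobi_weight \<alpha> \<beta> x)"
      by (rule F_sym[OF pt pc])
    have i1: "(\<lambda>x. \<mu> c * (\<psi> c x * \<psi> t x * jacobi_weight \<alpha> \<beta> x)) integrable_on {-1..1}"
      by (intro int_cmul int_cont continuous_intros pc pt)
    have i2: "(\<lambda>x. (t - c) * (\<psi> t x * G x * jacobi_weight \<alpha> \<beta> x)) integrable_on {-1..1}"
      by (intro int_cmul int_cont continuous_intros Gc pt)
    have i3: "(\<lambda>x. \<psi> t x * H t x * jacobi_weight \<alpha> \<beta> x) integrable_on {-1..1}"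
      by (intro int_cont continuous_intros Hc pt)
    have "integral {-1..1} (\<lambda>x. \<psi> t x * F_op \<alpha> \<beta> t (\<psi> c) x * jacobi_weight \<alpha> \<beta> x)
        = integral {-1..1} (\<lambda>x. (\<mu> c * (\<psi> c x * \<psi> t x * jacobi_weight \<alpha> \<beta> x)
             + (t - c) * (\<psi> t x * G x * jacobi_weight \<alpha> \<beta> x))
             + \<psi> t x * H t x * jacobi_weight \<alpha> \<beta> x)"
    proof (rule Henstock_Kurzweil_Integration.integral_cong)
      fix x :: real assume x: "x \<in> {-1..1}"
      show "\<psi> t x * F_op \<alpha> \<beta> t (\<psi> c) x * jacobi_weight \<alpha> \<beta> x
        = (\<mu> c * (\<psi> c x * \<psi> t x * jacobi_weight \<alpha> \<beta> x)
             + (t - c) * (\<psi> t x * G x * jacobi_weight \<alpha> \<beta> x))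
             + \<psi> t x * H t x * jacobi_weight \<alpha> \<beta> x"
        unfolding H_def eigen[OF c x] by (simp add: algebra_simps)
    qed
    also have "\<dots> = \<mu> c * A t + (t - c) * J t + R t"
      unfolding Henstock_Kurzweil_Integration.integral_add[OF integrable_add[OF i1 i2] i3]
        Henstock_Kurzweil_Integration.integral_add[OF i1 i2]
        Henstock_Kurzweil_Integration.integral_mult_right A_def J_def R_def ..
    finally show ?thesis using e1 e2 by (simp add: algebra_simps)
  qed

  define K where "K = M * (4 * exp c * M * WW) * WW"
  have Rb: "\<bar>R t\<bar> \<le> K * (t - c)^2" if t: "t \<in> S" for t
  proof -
    have t0: "t > 0" using S0 t by simp
    have tc: "\<bar>t - c\<bar> \<le> c / 2" using t c unfolding S_def by (auto simp: abs_if)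
    have Hb: "\<bar>H t x\<bar> \<le> (4 * exp c * (t - c)^2 * M) * WW" if x: "x \<in> {-1..1}" for x
      unfolding H_def F_op_def G_def Gf_def
    proof (rule quad_int)
      show "continuous_on {-1..1} (\<lambda>y. exp (t * (x * y - 1)) * \<psi> c y)" by (intro continuous_intros pc)
      show "continuous_on {-1..1} (\<lambda>y. exp (c * (x * y - 1)) * \<psi> c y)" by (intro continuous_intros pc)
      show "continuous_on {-1..1} (\<lambda>y. (x * y - 1) * exp (c * (x * y - 1)) * \<psi> c y)" by (intro continuous_intros pc)
      fix y :: real assume y: "y \<in> {-1..1}"
      define a where "a = c * (x * y - 1)"
      define b where "b = t * (x * y - 1)"
      have ba: "b - a = (t - c) * (x * y - 1)" unfolding a_def b_def by (simp add: algebra_simps)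
      have xy: "\<bar>x * y\<bar> \<le> 1" using x y by (auto simp: abs_mult intro: mult_le_one)
      have xy2: "\<bar>x * y - 1\<bar> \<le> 2" using xy by linarith
      have a0: "a \<le> 0" unfolding a_def using c xy by (simp add: mult_nonneg_nonpos)
      have "\<bar>b - a\<bar> = \<bar>t - c\<bar> * \<bar>x * y - 1\<bar>" unfolding ba by (simp add: abs_mult)
      also have "\<dots> \<le> (c / 2) * 2" using tc xy2 c by (intro mult_mono) auto
      finally have bab: "\<bar>b - a\<bar> \<le> c" by simp
      have "(x * y - 1)^2 \<le> 2^2" using xy2 by (metis abs_le_square_iff abs_numeral)
      then have "(b - a)^2 \<le> (t - c)^2 * 4" unfolding ba power_mult_distrib by (intro mult_left_mono) auto
      then have ba2: "(b - a)^2 \<le> 4 * (t - c)^2" by simp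
      have e1: "\<bar>exp b - exp a - (b - a) * exp a\<bar> \<le> (b - a)^2 * exp (a + \<bar>b - a\<bar>)"
        by (rule exp_quad_bound)
      also have "\<dots> \<le> (4 * (t - c)^2) * exp c"
        using a0 bab ba2 by (intro mult_mono) auto
      finally have e2: "\<bar>exp b - exp a - (b - a) * exp a\<bar> \<le> 4 * (t - c)^2 * exp c" .
      have "exp (t * (x * y - 1)) * \<psi> c y - exp (c * (x * y - 1)) * \<psi> c y - (t - c) * ((x * y - 1) * exp (c * (x * y - 1)) * \<psi> c y)
          = (exp b - exp a - (b - a) * exp a) * \<psi> c y"
        unfolding ba by (simp add: a_def b_def algebra_simps)
      also have "\<bar>\<dots>\<bar> \<le> (4 * (t - c)^2 * exp c) * M"
        unfolding abs_mult using e2 M[OF cS y] by (intro mult_mono) auto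
      finally show "\<bar>exp (t * (x * y - 1)) * \<psi> c y - exp (c * (x * y - 1)) * \<psi> c y - (t - c) * ((x * y - 1) * exp (c * (x * y - 1)) * \<psi> c y)\<bar>
          \<le> 4 * exp c * (t - c)^2 * M" by (simp add: mult_ac)
    qed
    have "\<bar>R t\<bar> \<le> M * (4 * exp c * (t - c)^2 * M * WW) * WW"
      unfolding R_def
    proof (rule int_bound)
      show "continuous_on {-1..1} (\<lambda>x. \<psi> t x * H t x)" by (intro continuous_intros psix t0 Hc)
      fix x :: real assume x: "x \<in> {-1..1}"
      show "\<bar>\<psi> t x * H t x\<bar> \<le> M * (4 * exp c * (t - c)^2 * M * WW)"
        unfolding abs_mult using M[OF t x] Hb[OF x] M0 by (intro mult_mono) auto
    qed
    then show ?thesis unfolding K_def by (simp add: mult_ac)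
  qed
  have K0: "K \<ge> 0" unfolding K_def using M0 WW_nonneg by simp

  have "continuous_on (S \<times> {-1..1}) (\<lambda>p. \<psi> c (snd p) * (\<lambda>(t, x). \<psi> t x) p)"
    by (intro continuous_intros cont_snd pc psiS)
  then have "continuous_on (S \<times> {-1..1}) (\<lambda>(t, y). \<psi> c y * \<psi> t y)"
    by (simp add: case_prod_beta)
  from param_cont[OF Sc this] have "continuous_on S A" unfolding A_def .
  then have "continuous (at c) A" by (rule continuous_on_interior[OF _ cint])
  then have Alim: "(A \<longlongrightarrow> A c) (at c)" by (simp add: continuous_at)

  have "continuous_on (S \<times> {-1..1}) (\<lambda>p. (\<lambda>(t, x). \<psi> t x) p * G (snd p))"
    by (intro continuous_intros cont_snd Gc psiS)
  then have "continuous_on (S \<times> {-1..1}) (\<lambda>(t, y). \<psi> t y * G y)"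
    by (simp add: case_prod_beta)
  from param_cont[OF Sc this] have "continuous_on S J" unfolding J_def .
  then have "continuous (at c) J" by (rule continuous_on_interior[OF _ cint])
  then have Jlim: "(J \<longlongrightarrow> J c) (at c)" by (simp add: continuous_at)

  have Ac: "A c = (\<mu> c)\<^sup>2"
    unfolding A_def normal[OF c, symmetric]
    by (rule Henstock_Kurzweil_Integration.integral_cong) (simp add: power2_eq_square)
  have Ac0: "A c \<noteq> 0" using Ac nonzero[OF c] by simp

  have evS: "eventually (\<lambda>t. t \<in> S) (at c)"
  proof -
    have "eventually (\<lambda>t. t \<in> {c/2<..<3*c/2}) (at c)"
      by (rule eventually_at_in_open') (use c in auto)
    then show ?thesis by eventually_elim (auto simp: S_def)
  qed
  have evne: "eventually (\<lambda>t. t \<noteq> c) (at c)" by (rule eventually_neq_at_within)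
  have evA: "eventually (\<lambda>t. A t \<noteq> 0) (at c)" by (rule tendsto_imp_eventually_ne[OF Alim Ac0])

  have Rlim: "((\<lambda>t. R t / (t - c)) \<longlongrightarrow> 0) (at c)"
  proof (rule Lim_null_comparison[where g="\<lambda>t. K * \<bar>t - c\<bar>"])
    show "eventually (\<lambda>t. norm (R t / (t - c)) \<le> K * \<bar>t - c\<bar>) (at c)"
      using evS evne
    proof eventually_elim
      case (elim t)
      then have tc: "t - c \<noteq> 0" by simp
      have "norm (R t / (t - c)) = \<bar>R t\<bar> / \<bar>t - c\<bar>" by (simp add: abs_divide)
      also have "\<dots> \<le> K * (t - c)^2 / \<bar>t - c\<bar>"
        using Rb[OF elim(1)] by (intro divide_right_mono) auto
      also have "\<dots> = K * \<bar>t - c\<bar>"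
      proof -
        have "(t - c)^2 = \<bar>t - c\<bar> * \<bar>t - c\<bar>" by (simp add: power2_eq_square)
        then have "K * (t - c)^2 / \<bar>t - c\<bar> = K * (\<bar>t - c\<bar> * \<bar>t - c\<bar>) / \<bar>t - c\<bar>" by (simp only:)
        also have "\<dots> = K * \<bar>t - c\<bar>" using tc by (simp only: abs_mult_self_eq) (auto simp: abs_if field_simps power2_eq_square)
        finally show ?thesis .
      qed
      finally show ?case .
    qed
    have "((\<lambda>t. K * \<bar>t - c\<bar>) \<longlongrightarrow> K * \<bar>c - c\<bar>) (at c)" by (intro tendsto_intros)
    then show "((\<lambda>t. K * \<bar>t - c\<bar>) \<longlongrightarrow> 0) (at c)" by simp
  qed

  have lim1: "((\<lambda>t. (J t + R t / (t - c)) / A t) \<longlongrightarrow> (J c + 0) / A c) (at c)"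
    by (intro tendsto_divide tendsto_add Jlim Rlim Alim Ac0)
  have ev: "eventually (\<lambda>t. (J t + R t / (t - c)) / A t = (\<mu> t - \<mu> c) / (t - c)) (at c)"
    using evS evne evA
  proof eventually_elim
    case (elim t)
    then have tc: "t - c \<noteq> 0" by simp
    have k: "(\<mu> t - \<mu> c) * A t = (t - c) * J t + R t" by (rule key[OF elim(1)])
    have "(J t + R t / (t - c)) / A t = ((t - c) * J t + R t) / ((t - c) * A t)"
      using tc elim(3) by (simp add: field_simps)
    also have "\<dots> = (\<mu> t - \<mu> c) / (t - c)"
      unfolding k[symmetric] using tc elim(3) by (simp add: field_simps)
    finally show ?case .
  qed
  have lim2: "((\<lambda>t. (\<mu> t - \<mu> c) / (t - c)) \<longlongrightarrow> J c / A c) (at c)"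
    using Lim_transform_eventually[OF lim1 ev] by simp
  then have der: "(\<mu> has_real_derivative J c / A c) (at c)"
    unfolding has_field_derivative_iff .
  have Jc: "J c = \<mu> c / c * I_int \<alpha> \<beta> (\<psi> c) - \<mu> c * (\<mu> c)\<^sup>2"
    unfolding J_def G_def
    by (rule J_identity[OF pc c nonzero[OF c] eigen[OF c] normal[OF c]])
  have "J c / A c = (1 / \<mu> c) * (I_int \<alpha> \<beta> (\<psi> c) / c - (\<mu> c)\<^sup>2)"
    unfolding Jc Ac using nonzero[OF c] c by (simp add: field_simps power2_eq_square)
  with der show ?thesis by simp
qed

end
theorem proposition1:
  fixes \<alpha> \<beta> :: real
    and \<mu> :: "real \<Rightarrow> real"            \<comment> \<open>c \<mapsto> mu_n(c)\<close>
    and \<psi> \<psi>c :: "real \<Rightarrow> real \<Rightarrow> real"  \<comment> \<open>c \<mapsto> v \<mapsto> psi_n(v;c), and its c-derivative\<close>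
  assumes "\<alpha> > -1" and "\<beta> > -1"
    and eigen: "\<And>c x. c > 0 \<Longrightarrow> x \<in> {-1..1} \<Longrightarrow> F_op \<alpha> \<beta> c (\<psi> c) x = \<mu> c * \<psi> c x"
    and nonzero: "\<And>c. c > 0 \<Longrightarrow> \<mu> c \<noteq> 0"
    and normal: "\<And>c. c > 0 \<Longrightarrow>
        integral {-1..1} (\<lambda>x. (\<psi> c x)\<^sup>2 * jacobi_weight \<alpha> \<beta> x) = (\<mu> c)\<^sup>2"
    and mu_diff: "\<And>c. c > 0 \<Longrightarrow> \<mu> differentiable (at c)"
    and psi_cont: "continuous_on ({0<..} \<times> {-1..1}) (\<lambda>(c, x). \<psi> c x)"
    and psi_dc: "\<And>c x. c > 0 \<Longrightarrow> x \<in> {-1..1} \<Longrightarrow>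
        ((\<lambda>t. \<psi> t x) has_real_derivative \<psi>c c x) (at c)"
    and psic_cont: "continuous_on ({0<..} \<times> {-1..1}) (\<lambda>(c, x). \<psi>c c x)"
    and "c > 0"
  shows "(\<mu> has_real_derivative
           (1 / \<mu> c) * (I_int \<alpha> \<beta> (\<psi> c) / c - (\<mu> c)\<^sup>2)) (at c)"
  proof -
  interpret jw \<alpha> \<beta> by unfold_locales (use assms(1,2) in auto)
  show ?thesis by (rule main[OF eigen nonzero normal psi_cont \<open>c > 0\<close>])
qed

end
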